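(* Let $G=(V,E)$ be a temporal network, let $\pi$ be an ordering of $V$, and let $\delta\ge 0$. Let $e=(u,v,t)\in E$ be a temporal edge with $\pi(u)<\pi(v)$, and let $w\in N^{+}_{\pi}(u)$ be a vertex adjacent to $v$ in $G_S$. Put $L_2=E_{u,w}$ and $L_3=E_{v,w}$. Let $L_{12}[e]$ be the first edge of $L_2$ (in sorted order) whose timestamp is at least $t(e)$, and for $f\in L_2$ let $L_{23}[f]$ be the first edge of $L_3$ whose timestamp is at least $t(f)$. Then $e$ forms at least one $\delta$-temporal triangle with $w$ if and only if $L_{12}[e]$ and $L_{23}[L_{12}[e]]$ exist and $$t(e)\le t(L_{12}[e])\le t(L_{23}[L_{12}[e]])\le t(e)+\delta.$$
   Context: A temporal network $G=(V,E)$ is a finite multiset of temporal edges $(x,y,t)$ with $x\neq y\in V$ and timestamp $t=t(e)\in\mathbb{R}$; the edge goes from $x$ to $y$, and parallel edges (in both directions) are allowed. For distinct $x,y\in V$, $E_{x,y}$ denotes the list of temporal edges from $x$ to $y$, sorted by increasing timestamp. $G_S$ is the underlying static graph: the simple undirected graph on $V$ with $\{x,y\}$ an edge iff there is at least one temporal edge between $x$ and $y$ (in either direction); $N(x)$ is the neighbourhood of $x$ in $G_S$. For an ordering $\pi$ of $V$, $N^{+}_{\pi}(x)=\{y\in N(x):\pi(x)<\pi(y)\}$. For $\delta\ge 0$, a temporal edge $e=(a,b,t)$ forms a $\delta$-temporal triangle with a vertex $c$ if there exist temporal edges $(a,c,t_2)$ and $(b,c,t_3)$ in $E$ with $t\le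 t_2\le t_3\le t+\delta$. *)

theory Defs
  imports Complex_Main "HOL-Library.Multiset"
begin

type_synonym 'v tedge = "'v \<times> 'v \<times> real"

definition src :: "'v tedge \<Rightarrow> 'v" where "src e = fst e"
definition dst :: "'v tedge \<Rightarrow> 'v" where "dst e = fst (snd e)"
definition time :: "'v tedge \<Rightarrow> real" where "time e = snd (snd e)"

definition temporal_network :: "'v set \<Rightarrow> 'v tedge multiset \<Rightarrow> bool" where
  "temporal_network V E \<longleftrightarrow> (\<forall>e\<in>#E. src e \<noteq> dst e \<and> src e \<in> V \<and> dst e \<in> V)"

text \<open>L is the list E_{x,y}: the temporal edges from x to y, sorted by increasing timestamp.\<close>
definition is_edge_list :: "'v tedge multiset \<Rightarrow> 'v \<Rightarrow> 'v \<Rightarrow> 'v tedge list \<Rightarrow> bool" where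
  "is_edge_list E x y L \<longleftrightarrow>
     mset L = filter_mset (\<lambda>e. src e = x \<and> dst e = y) E \<and> sorted (map time L)"

definition nbrs :: "'v tedge multiset \<Rightarrow> 'v \<Rightarrow> 'v set" where
  "nbrs E x = {y. y \<noteq> x \<and> (\<exists>e\<in>#E. (src e = x \<and> dst e = y) \<or> (src e = y \<and> dst e = x))}"

definition out_nbrs :: "'v tedge multiset \<Rightarrow> ('v \<Rightarrow> nat) \<Rightarrow> 'v \<Rightarrow> 'v set" where
  "out_nbrs E \<pi> x = {y \<in> nbrs E x. \<pi> x < \<pi> y}"

definition is_ordering :: "'v set \<Rightarrow> ('v \<Rightarrow> nat) \<Rightarrow> bool" where
  "is_ordering V \<pi> \<longleftrightarrow> inj_on \<pi> V"

definition forms_triangle :: "'v tedge multiset \<Rightarrow> real \<Rightarrow> 'v tedge \<Rightarrow> 'v \<Rightarrow> bool" where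
  "forms_triangle E \<delta> e c \<longleftrightarrow>
     (\<exists>t2 t3. (src e, c, t2) \<in># E \<and> (dst e, c, t3) \<in># E \<and>
              time e \<le> t2 \<and> t2 \<le> t3 \<and> t3 \<le> time e + \<delta>)"

definition first_geq :: "'v tedge list \<Rightarrow> real \<Rightarrow> 'v tedge option" where
  "first_geq L t = find (\<lambda>f. t \<le> time f) L"

end

theory Submission
  imports Defs
begin

lemma first_geq_ex:
  assumes "sorted (map time L)" "x \<in> set L" "t \<le> time x"
  shows "\<exists>f. first_geq L t = Some f \<and> f \<in> set L \<and> t \<le> time f \<and> time f \<le> time x"
  using assms
proof (induction L)
  case Nil then show ?case by simp
next
  case (Cons a L)
  show ?case
  proof (cases "t \<le> time a")
    case True
    have "time a \<le> time x" using Cons.prems by auto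
    then show ?thesis using True by (simp add: first_geq_def)
  next
    case False
    then have "x \<in> set L" using Cons.prems by auto
    then obtain f where "first_geq L t = Some f \<and> f \<in> set L \<and> t \<le> time f \<and> time f \<le> time x"
      using Cons by auto
    then show ?thesis using False by (auto simp: first_geq_def)
  qed
qed

lemma first_geq_some:
  assumes "first_geq L t = Some f"
  shows "f \<in> set L \<and> t \<le> time f"
  using assms unfolding first_geq_def by (metis find_Some_iff nth_mem)

lemma edge_list_mem:
  assumes "is_edge_list E x y L"
  shows "f \<in> set L \<longleftrightarrow> f \<in># E \<and> src f = x \<and> dst f = y"
proof -
  have "f \<in> set L \<longleftrightarrow> f \<in># mset L" by simp
  also have "\<dots> \<longleftrightarrow> f \<in># E \<and> src f = x \<and> dst f = y"
    using assms unfolding is_edge_list_def by auto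
  finally show ?thesis .
qed

lemma triple_eq: "f = (src f, dst f, time f)"
  by (simp add: src_def dst_def time_def)

theorem theorem3p1:
  fixes V :: "'v set" and E :: "'v tedge multiset" and \<pi> :: "'v \<Rightarrow> nat"
    and \<delta> :: real and e :: "'v tedge" and u v w :: 'v and L2 L3 :: "'v tedge list"
  assumes "temporal_network V E"
    and "is_ordering V \<pi>"
    and "\<delta> \<ge> 0"
    and "e \<in># E" and "src e = u" and "dst e = v" and "\<pi> u < \<pi> v"
    and "w \<in> out_nbrs E \<pi> u" and "w \<in> nbrs E v"
    and "is_edge_list E u w L2" and "is_edge_list E v w L3"
  shows "forms_triangle E \<delta> e w \<longleftrightarrow>
    (\<exists>f g. first_geq L2 (time e) = Some f \<and> first_geq L3 (time f) = Some g \<and>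
           time e \<le> time f \<and> time f \<le> time g \<and> time g \<le> time e + \<delta>)"
proof
  assume "forms_triangle E \<delta> e w"
  then obtain t2 t3 where h: "(u, w, t2) \<in># E" "(v, w, t3) \<in># E"
    "time e \<le> t2" "t2 \<le> t3" "t3 \<le> time e + \<delta>"
    using assms(5,6) unfolding forms_triangle_def by auto
  have m2: "(u, w, t2) \<in> set L2" using h(1) edge_list_mem[OF assms(10)]
    by (simp add: src_def dst_def)
  have m3: "(v, w, t3) \<in> set L3" using h(2) edge_list_mem[OF assms(11)]
    by (simp add: src_def dst_def)
  have s2: "sorted (map time L2)" and s3: "sorted (map time L3)"
    using assms(10,11) by (auto simp: is_edge_list_def)
  obtain f where f: "first_geq L2 (time e) = Some f" "time e \<le> time f" "time f \<le> t2"
    using first_geq_ex[OF s2 m2, of "time e"] h(3) by (auto simp: time_def)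
  obtain g where g: "first_geq L3 (time f) = Some g" "time f \<le> time g" "time g \<le> t3"
    using first_geq_ex[OF s3 m3, of "time f"] f(3) h(4) by (auto simp: time_def)
  show "\<exists>f g. first_geq L2 (time e) = Some f \<and> first_geq L3 (time f) = Some g \<and>
           time e \<le> time f \<and> time f \<le> time g \<and> time g \<le> time e + \<delta>"
    using f g h by (intro exI[of _ f] exI[of _ g]) auto
next
  assume "\<exists>f g. first_geq L2 (time e) = Some f \<and> first_geq L3 (time f) = Some g \<and>
           time e \<le> time f \<and> time f \<le> time g \<and> time g \<le> time e + \<delta>"
  then obtain f g where fg: "first_geq L2 (time e) = Some f" "first_geq L3 (time f) = Some g"
    "time e \<le> time f" "time f \<le> time g" "time g \<le> time e + \<delta>" by blast
  have f: "f \<in># E" "src f = u" "dst f = w"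
    using first_geq_some[OF fg(1)] edge_list_mem[OF assms(10)] by auto
  have g: "g \<in># E" "src g = v" "dst g = w"
    using first_geq_some[OF fg(2)] edge_list_mem[OF assms(11)] by auto
  have "(u, w, time f) \<in># E" using f triple_eq[of f] by metis
  moreover have "(v, w, time g) \<in># E" using g triple_eq[of g] by metis
  ultimately show "forms_triangle E \<delta> e w"
    unfolding forms_triangle_def using fg assms(5,6) by blast
qed

end
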